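(* For every $n\geq1$, the number of $\mathcal{B}_n$-orbits of acute $0/1$-triangles in $[0,1]^n$ equals $$\left\lfloor\frac{2n^3+3n^2-6n+9}{72}\right\rfloor.$$
   Context: A $0/1$-triangle in $[0,1]^n$ is the convex hull of three distinct points of $\{0,1\}^n$; it is acute if all three of its angles are strictly less than $\pi/2$. $\mathcal{B}_n$ is the hyperoctahedral group of symmetries of $[0,1]^n$ (acting on $\{0,1\}^n$ by coordinate permutations combined with complementation of a subset of coordinates); two triangles are counted as the same if one is mapped onto the other by an element of $\mathcal{B}_n$. *)

theory Defs
  imports "HOL-Analysis.Analysis"
begin

text \<open>The cube vertices {0,1}^n, with n = CARD('n).\<close>
definition cube_vertices :: "(real ^ 'n) set" where
  "cube_vertices = {x. \<forall>i. x $ i = 0 \<or> x $ i = 1}"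

definition vertex_angle :: "real ^ 'n \<Rightarrow> real ^ 'n \<Rightarrow> real ^ 'n \<Rightarrow> real" where
  "vertex_angle v a b = arccos (((a - v) \<bullet> (b - v)) / (norm (a - v) * norm (b - v)))"

definition zo_triangle :: "(real ^ 'n) set \<Rightarrow> bool" where
  "zo_triangle T \<longleftrightarrow> (\<exists>a b c. a \<in> cube_vertices \<and> b \<in> cube_vertices \<and> c \<in> cube_vertices
      \<and> a \<noteq> b \<and> b \<noteq> c \<and> a \<noteq> c \<and> T = convex hull {a, b, c})"

definition acute_zo_triangle :: "(real ^ 'n) set \<Rightarrow> bool" where
  "acute_zo_triangle T \<longleftrightarrow> (\<exists>a b c. a \<in> cube_vertices \<and> b \<in> cube_vertices \<and> c \<in> cube_vertices
      \<and> a \<noteq> b \<and> b \<noteq> c \<and> a \<noteq> c \<and> T = convex hull {a, b, c}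
      \<and> vertex_angle a b c < pi / 2 \<and> vertex_angle b a c < pi / 2 \<and> vertex_angle c a b < pi / 2)"

definition hyperoct_map :: "('n \<Rightarrow> 'n) \<Rightarrow> 'n set \<Rightarrow> real ^ 'n \<Rightarrow> real ^ 'n" where
  "hyperoct_map \<sigma> C x = (\<chi> i. if i \<in> C then 1 - x $ (\<sigma> i) else x $ (\<sigma> i))"

definition hyperoctahedral_group :: "(real ^ 'n \<Rightarrow> real ^ 'n) set" where
  "hyperoctahedral_group = {hyperoct_map \<sigma> C | \<sigma> C. \<sigma> permutes (UNIV :: 'n set)}"

definition Bn_orbit :: "(real ^ 'n) set \<Rightarrow> (real ^ 'n) set set" where
  "Bn_orbit T = {g ` T | g. g \<in> hyperoctahedral_group}"

end

theory Submission
  imports Defs "HOL-Library.Multiset"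
begin


lemma cubeD: "a \<in> cube_vertices \<Longrightarrow> a$i = 0 \<or> a$i = 1"
  by (auto simp: cube_vertices_def)

lemma angle_acute:
  fixes v a b :: "real^'n"
  assumes "a \<noteq> v" "b \<noteq> v"
  shows "vertex_angle v a b < pi/2 \<longleftrightarrow> 0 < (a-v) \<bullet> (b-v)"
proof -
  define d where "d = norm (a-v) * norm (b-v)"
  have d: "0 < d" using assms by (simp add: d_def)
  define x where "x = ((a-v) \<bullet> (b-v)) / d"
  have "\<bar>(a-v) \<bullet> (b-v)\<bar> \<le> d" unfolding d_def by (rule Cauchy_Schwarz_ineq2)
  then have x1: "\<bar>x\<bar> \<le> 1" using d by (simp add: x_def abs_divide)
  have "vertex_angle v a b = arccos x" by (simp add: vertex_angle_def x_def d_def)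
  moreover have "pi/2 = arccos 0" by simp
  ultimately have "vertex_angle v a b < pi/2 \<longleftrightarrow> 0 < x" using arccos_less_mono[OF x1, of 0] by simp
  also have "\<dots> \<longleftrightarrow> 0 < (a-v) \<bullet> (b-v)" using d by (simp add: x_def zero_less_divide_iff)
  finally show ?thesis .
qed

lemma inner_cube:
  fixes a b c :: "real^'n"
  assumes "a \<in> cube_vertices" "b \<in> cube_vertices" "c \<in> cube_vertices"
  shows "(b-a) \<bullet> (c-a) = real (card {i. a$i \<noteq> b$i \<and> a$i \<noteq> c$i})"
proof -
  have "(b-a) \<bullet> (c-a) = (\<Sum>i\<in>UNIV. (if a$i \<noteq> b$i \<and> a$i \<noteq> c$i then 1 else 0))"
    unfolding inner_vec_def
    apply (rule sum.cong[OF refl])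
    subgoal for i
      using cubeD[OF assms(1), of i] cubeD[OF assms(2), of i] cubeD[OF assms(3), of i] by auto
    done
  also have "\<dots> = real (card {i. a$i \<noteq> b$i \<and> a$i \<noteq> c$i})"
    by (simp add: sum.If_cases)
  finally show ?thesis .
qed

lemma coord_aux:
  fixes u v w p1 q1 r1 x :: real
  assumes "p1 = 0 \<or> p1 = 1" "q1 = 0 \<or> q1 = 1" "r1 = 0 \<or> r1 = 1" "x = 0 \<or> x = 1"
    "0 \<le> u" "0 \<le> v" "0 \<le> w" "u+v+w = 1" "x = u * p1 + v * q1 + w * r1"
  shows "(0 < u \<longrightarrow> p1 = x) \<and> (0 < v \<longrightarrow> q1 = x) \<and> (0 < w \<longrightarrow> r1 = x)"
  using assms(1-4)
  apply (elim disjE)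
  using assms(5-9) by simp_all

lemma hull_vertex:
  fixes a b c x :: "real^'n"
  assumes "a \<in> cube_vertices" "b \<in> cube_vertices" "c \<in> cube_vertices" "x \<in> cube_vertices"
    and "x \<in> convex hull {a,b,c}"
  shows "x \<in> {a,b,c}"
proof -
  obtain u v w where uvw: "0 \<le> u" "0 \<le> v" "0 \<le> w" "u+v+w = 1" "x = u *\<^sub>R a + v *\<^sub>R b + w *\<^sub>R c"
    using assms(5) unfolding convex_hull_3 by blast
  have co: "x$i = u * a$i + v * b$i + w * c$i" for i using uvw(5) by simp
  have key: "(0 < u \<longrightarrow> a$i = x$i) \<and> (0 < v \<longrightarrow> b$i = x$i) \<and> (0 < w \<longrightarrow> c$i = x$i)" for i
    by (rule coord_aux[OF cubeD[OF assms(1), of i] cubeD[OF assms(2), of i] cubeD[OF assms(3), of i] cubeD[OF assms(4), of i]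
      uvw(1-4) co[of i]])
  have "0 < u \<or> 0 < v \<or> 0 < w" using uvw(1-4) by linarith
  then show ?thesis using key by (auto simp: vec_eq_iff)
qed

lemma hm_nth: "hyperoct_map \<sigma> C x $ i = (if i \<in> C then 1 - x $ (\<sigma> i) else x $ (\<sigma> i))"
  by (simp add: hyperoct_map_def)

lemma hm_cube: "x \<in> cube_vertices \<Longrightarrow> hyperoct_map \<sigma> C x \<in> cube_vertices"
  by (auto simp: cube_vertices_def hm_nth)

lemma hm_neq: "(hyperoct_map \<sigma> C u $ i \<noteq> hyperoct_map \<sigma> C v $ i) \<longleftrightarrow> u$(\<sigma> i) \<noteq> v$(\<sigma> i)"
  by (auto simp: hm_nth)

lemma hm_inj:
  assumes "\<sigma> permutes UNIV"
  shows "inj (hyperoct_map \<sigma> C)"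
proof (rule injI)
  fix u v assume "hyperoct_map \<sigma> C u = hyperoct_map \<sigma> C v"
  then have "u$(\<sigma> i) = v$(\<sigma> i)" for i using hm_neq[of \<sigma> C u i v] by metis
  moreover have "surj \<sigma>" using assms by (simp add: permutes_surj)
  ultimately show "u = v" by (metis vec_eq_iff surjD)
qed

lemma hm_hull: fixes \<sigma> :: "'n::finite \<Rightarrow> 'n" shows "hyperoct_map \<sigma> C ` (convex hull S) = convex hull (hyperoct_map \<sigma> C ` S)"
proof -
  define k :: "real^'n" where "k = (\<chi> i. if i \<in> C then 1 else 0)"
  define f :: "real^'n \<Rightarrow> real^'n" where "f = (\<lambda>x. \<chi> i. if i \<in> C then - x$(\<sigma> i) else x$(\<sigma> i))"
  have lin: "linear f"
    by (rule linearI) (auto simp: f_def vec_eq_iff)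
  have e: "hyperoct_map \<sigma> C = (\<lambda>x. k + x) \<circ> f"
    by (auto simp: fun_eq_iff vec_eq_iff hm_nth k_def f_def)
  show ?thesis unfolding e image_comp[symmetric]
    by (simp add: convex_hull_linear_image[OF lin] convex_hull_translation)
qed

lemma hm_id: "hyperoct_map id {} = id"
  by (auto simp: fun_eq_iff vec_eq_iff hm_nth)

lemma hm_comp: "hyperoct_map \<sigma> C \<circ> hyperoct_map \<tau> D = hyperoct_map (\<tau> \<circ> \<sigma>) {i. (i \<in> C) \<noteq> (\<sigma> i \<in> D)}"
  by (auto simp: fun_eq_iff vec_eq_iff hm_nth)

lemma group_comp: "g \<in> hyperoctahedral_group \<Longrightarrow> h \<in> hyperoctahedral_group \<Longrightarrow> g \<circ> h \<in> hyperoctahedral_group"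
proof -
  assume "g \<in> hyperoctahedral_group" "h \<in> hyperoctahedral_group"
  then obtain \<sigma> C \<tau> D where st: "\<sigma> permutes UNIV" "\<tau> permutes UNIV" and gh: "g = hyperoct_map \<sigma> C" "h = hyperoct_map \<tau> D"
    unfolding hyperoctahedral_group_def by blast
  have "g \<circ> h = hyperoct_map (\<tau> \<circ> \<sigma>) {i. (i \<in> C) \<noteq> (\<sigma> i \<in> D)}" unfolding gh by (rule hm_comp)
  moreover have "\<tau> \<circ> \<sigma> permutes UNIV" using permutes_compose[OF st(1) st(2)] .
  ultimately show ?thesis unfolding hyperoctahedral_group_def by blast
qed

lemma group_id: "(id :: real^'n::finite \<Rightarrow> real^'n) \<in> hyperoctahedral_group"
proof -
  have "(id :: real^'n \<Rightarrow> real^'n) = hyperoct_map id {} \<and> (id::'n\<Rightarrow>'n) permutes UNIV" by (simp add: hm_id)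
  then show ?thesis unfolding hyperoctahedral_group_def by blast
qed



lemma mset3:
  "{#x,y,z#} = {#x',y',z'#} \<Longrightarrow> (x=x'\<and>y=y'\<and>z=z') \<or> (x=x'\<and>y=z'\<and>z=y') \<or> (x=y'\<and>y=x'\<and>z=z') \<or>
     (x=y'\<and>y=z'\<and>z=x') \<or> (x=z'\<and>y=x'\<and>z=y') \<or> (x=z'\<and>y=y'\<and>z=x')"
  by (auto simp: add_eq_conv_ex)

definition labS :: "(real^'n) set \<Rightarrow> real^'n \<Rightarrow> 'n set" where
  "labS S v = {i. \<forall>u\<in>S-{v}. v$i \<noteq> u$i}"

definition mm :: "(real^'n) set \<Rightarrow> nat multiset" where
  "mm S = image_mset (\<lambda>v. card (labS S v)) (mset_set S)"

lemma labS_hm: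
  fixes \<sigma> :: "'n::finite \<Rightarrow> 'n"
  assumes "\<sigma> permutes UNIV" "v \<in> S"
  shows "card (labS (hyperoct_map \<sigma> C ` S) (hyperoct_map \<sigma> C v)) = card (labS S v)"
proof -
  let ?g = "hyperoct_map \<sigma> C"
  have inj: "inj ?g" by (rule hm_inj[OF assms(1)])
  have d: "?g ` S - {?g v} = ?g ` (S - {v})" using image_set_diff[OF inj, of S "{v}"] by simp
  have "labS (?g ` S) (?g v) = {i. \<forall>u\<in>S-{v}. ?g v $ i \<noteq> ?g u $ i}"
    unfolding labS_def d by simp
  also have "\<dots> = {i. \<forall>u\<in>S-{v}. v $ (\<sigma> i) \<noteq> u $ (\<sigma> i)}" by (simp only: hm_neq)
  also have "\<dots> = \<sigma> -` labS S v" unfolding labS_def by (simp add: vimage_def)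
  finally have "labS (?g ` S) (?g v) = \<sigma> -` labS S v" .
  moreover have "inj \<sigma>" "surj \<sigma>" using permutes_inj[OF assms(1)] permutes_surj[OF assms(1)] by auto
  ultimately show ?thesis using card_vimage_inj[of \<sigma> "labS S v"] by simp
qed

lemma mm_hm:
  fixes \<sigma> :: "'n::finite \<Rightarrow> 'n"
  assumes "\<sigma> permutes UNIV" "finite S"
  shows "mm (hyperoct_map \<sigma> C ` S) = mm S"
proof -
  let ?g = "hyperoct_map \<sigma> C"
  have inj: "inj ?g" by (rule hm_inj[OF assms(1)])
  have ms: "mset_set (?g ` S) = image_mset ?g (mset_set S)"
    using image_mset_mset_set[OF inj_on_subset[OF inj subset_UNIV]] by (rule sym)
  have "mm (?g ` S) = image_mset (\<lambda>v. card (labS (?g ` S) v)) (image_mset ?g (mset_set S))"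
    unfolding mm_def ms ..
  also have "\<dots> = image_mset (\<lambda>v. card (labS (?g ` S) (?g v))) (mset_set S)"
    by (simp only: multiset.map_comp o_def)
  also have "\<dots> = mm S" unfolding mm_def
  proof (rule image_mset_cong)
    fix v assume "v \<in># mset_set S"
    then have "v \<in> S" using elem_mset_set[OF assms(2)] by blast
    then show "card (labS (?g ` S) (?g v)) = card (labS S v)" by (rule labS_hm[OF assms(1)])
  qed
  finally show ?thesis .
qed

lemma mm3:
  assumes "a \<noteq> b" "b \<noteq> c" "a \<noteq> c"
  shows "mm {a,b,c} = {# card {i. a$i \<noteq> b$i \<and> a$i \<noteq> c$i}, card {i. b$i \<noteq> a$i \<and> b$i \<noteq> c$i},
      card {i. c$i \<noteq> a$i \<and> c$i \<noteq> b$i} #}"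
proof -
  have "labS {a,b,c} a = {i. a$i \<noteq> b$i \<and> a$i \<noteq> c$i}" "labS {a,b,c} b = {i. b$i \<noteq> a$i \<and> b$i \<noteq> c$i}"
    "labS {a,b,c} c = {i. c$i \<noteq> a$i \<and> c$i \<noteq> b$i}"
    using assms by (auto simp: labS_def)
  then show ?thesis using assms by (simp add: mm_def)
qed

lemma glue:
  fixes L L' :: "'n::finite \<Rightarrow> 'k"
  assumes "\<And>k. card {i. L i = k} = card {i. L' i = k}"
  shows "\<exists>\<sigma>. \<sigma> permutes UNIV \<and> (\<forall>i. L (\<sigma> i) = L' i)"
proof -
  have "\<forall>k. \<exists>f. bij_betw f {i. L' i = k} {i. L i = k}"
    using assms by (metis finite finite_same_card_bij)
  then obtain f where f: "\<And>k. bij_betw (f k) {i. L' i = k} {i. L i = k}" by metis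
  define \<sigma> where "\<sigma> i = f (L' i) i" for i
  have L: "L (\<sigma> i) = L' i" for i
    using bij_betwE[OF f[of "L' i"]] by (auto simp: \<sigma>_def)
  have "inj \<sigma>"
  proof (rule injI)
    fix i j assume e: "\<sigma> i = \<sigma> j"
    then have "L' i = L' j" using L by metis
    then show "i = j" using e bij_betw_imp_inj_on[OF f[of "L' i"]] unfolding \<sigma>_def
      by (auto simp: inj_on_def)
  qed
  then have "bij \<sigma>" using finite_UNIV_inj_surj[of \<sigma>] by (simp add: bij_def)
  then have "\<sigma> permutes UNIV" by (auto intro: bij_imp_permutes)
  then show ?thesis using L by blast
qed

lemma card_bb:
  fixes L :: "'n::finite \<Rightarrow> bool \<times> bool"
  shows "CARD('n) = card {i. L i = (False,False)} + card {i. L i = (False,True)} +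
     card {i. L i = (True,False)} + card {i. L i = (True,True)}"
proof -
  have "CARD('n) = card (\<Union>k\<in>UNIV. {i. L i = k})" by (rule arg_cong[of _ _ card]) auto
  also have "\<dots> = (\<Sum>k\<in>UNIV. card {i. L i = k})" by (rule card_UN_disjoint) auto
  also have "(UNIV :: (bool\<times>bool) set) = {(False,False),(False,True),(True,False),(True,True)}" by auto
  finally show ?thesis by simp
qed

lemma construct:
  fixes a b c a' b' c' :: "real^'n::finite"
  assumes cv: "a \<in> cube_vertices" "b \<in> cube_vertices" "c \<in> cube_vertices"
    "a' \<in> cube_vertices" "b' \<in> cube_vertices" "c' \<in> cube_vertices"
  and e1: "card {i. a$i \<noteq> b$i \<and> a$i \<noteq> c$i} = card {i. a'$i \<noteq> b'$i \<and> a'$i \<noteq> c'$i}"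
  and e2: "card {i. b$i \<noteq> a$i \<and> b$i \<noteq> c$i} = card {i. b'$i \<noteq> a'$i \<and> b'$i \<noteq> c'$i}"
  and e3: "card {i. c$i \<noteq> a$i \<and> c$i \<noteq> b$i} = card {i. c'$i \<noteq> a'$i \<and> c'$i \<noteq> b'$i}"
  shows "\<exists>g\<in>hyperoctahedral_group. g a = a' \<and> g b = b' \<and> g c = c'"
proof -
  define L where "L i = (a$i = b$i, a$i = c$i)" for i
  define L' where "L' i = (a'$i = b'$i, a'$i = c'$i)" for i
  note cd = cubeD[OF cv(1)] cubeD[OF cv(2)] cubeD[OF cv(3)] cubeD[OF cv(4)] cubeD[OF cv(5)] cubeD[OF cv(6)]
  have s1: "{i. L i = (False,False)} = {i. a$i \<noteq> b$i \<and> a$i \<noteq> c$i}" by (auto simp: L_def)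
  have s2: "{i. L i = (False,True)} = {i. b$i \<noteq> a$i \<and> b$i \<noteq> c$i}"
    unfolding L_def using cd(1-3) by (auto, metis+)
  have s3: "{i. L i = (True,False)} = {i. c$i \<noteq> a$i \<and> c$i \<noteq> b$i}"
    unfolding L_def using cd(1-3) by (auto, metis+)
  have s1': "{i. L' i = (False,False)} = {i. a'$i \<noteq> b'$i \<and> a'$i \<noteq> c'$i}" by (auto simp: L'_def)
  have s2': "{i. L' i = (False,True)} = {i. b'$i \<noteq> a'$i \<and> b'$i \<noteq> c'$i}"
    unfolding L'_def using cd(4-6) by (auto, metis+)
  have s3': "{i. L' i = (True,False)} = {i. c'$i \<noteq> a'$i \<and> c'$i \<noteq> b'$i}"
    unfolding L'_def using cd(4-6) by (auto, metis+)
  have "card {i. L i = k} = card {i. L' i = k}" for k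
  proof -
    have "k \<in> {(False,False),(False,True),(True,False),(True,True)}" by (cases k) auto
    moreover have "card {i. L i = (True,True)} = card {i. L' i = (True,True)}"
      using card_bb[of L] card_bb[of L'] s1 s2 s3 s1' s2' s3' e1 e2 e3 by simp
    ultimately show ?thesis using s1 s2 s3 s1' s2' s3' e1 e2 e3 by auto
  qed
  then obtain \<sigma> where \<sigma>: "\<sigma> permutes UNIV" "\<And>i. L (\<sigma> i) = L' i" using glue by metis
  define C where "C = {i. a'$i \<noteq> a$(\<sigma> i)}"
  let ?g = "hyperoct_map \<sigma> C"
  have "?g a = a' \<and> ?g b = b' \<and> ?g c = c'"
  proof (intro conjI)
    show "?g a = a'" unfolding vec_eq_iff hm_nth C_def
    proof
      fix i show "(if i \<in> {i. a' $ i \<noteq> a $ \<sigma> i} then 1 - a $ \<sigma> i else a $ \<sigma> i) = a' $ i"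
        using cd(1)[of "\<sigma> i"] cd(4)[of i] by auto
    qed
  next
    show "?g b = b'" unfolding vec_eq_iff hm_nth C_def
    proof
      fix i
      have "(a$(\<sigma> i) = b$(\<sigma> i)) = (a'$i = b'$i)" using \<sigma>(2)[of i] by (simp add: L_def L'_def)
      then show "(if i \<in> {i. a' $ i \<noteq> a $ \<sigma> i} then 1 - b $ \<sigma> i else b $ \<sigma> i) = b' $ i"
        using cd(1)[of "\<sigma> i"] cd(2)[of "\<sigma> i"] cd(4)[of i] cd(5)[of i] by auto
    qed
  next
    show "?g c = c'" unfolding vec_eq_iff hm_nth C_def
    proof
      fix i
      have "(a$(\<sigma> i) = c$(\<sigma> i)) = (a'$i = c'$i)" using \<sigma>(2)[of i] by (simp add: L_def L'_def)
      then show "(if i \<in> {i. a' $ i \<noteq> a $ \<sigma> i} then 1 - c $ \<sigma> i else c $ \<sigma> i) = c' $ i"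
        using cd(1)[of "\<sigma> i"] cd(3)[of "\<sigma> i"] cd(4)[of i] cd(6)[of i] by auto
    qed
  qed
  moreover have "?g \<in> hyperoctahedral_group" unfolding hyperoctahedral_group_def using \<sigma>(1) by blast
  ultimately show ?thesis by blast
qed



definition Qs :: "nat \<Rightarrow> (nat \<times> nat) set" where
  "Qs M = {(y,z). 0<y \<and> y\<le>z \<and> y+z \<le> M}"
definition Ss :: "nat \<Rightarrow> (nat \<times> nat \<times> nat) set" where
  "Ss N = {(x,y,z). 0<x \<and> x\<le>y \<and> y\<le>z \<and> x+y+z \<le> N}"

lemma Qs_finite: "finite (Qs M)"
  by (rule finite_subset[of _ "{..M}\<times>{..M}"]) (auto simp: Qs_def)

lemma Ss_finite: "finite (Ss N)"
  by (rule finite_subset[of _ "{..N}\<times>{..N}\<times>{..N}"]) (auto simp: Ss_def)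

lemma Qs_small: "M < 2 \<Longrightarrow> Qs M = {}"
  by (auto simp: Qs_def)

lemma Qs_step: "Qs (M+2) = (\<lambda>z. (1,z)) ` {1..M+1} \<union> (\<lambda>(y,z). (y+1,z+1)) ` Qs M"
proof
  show "Qs (M+2) \<subseteq> (\<lambda>z. (1,z)) ` {1..M+1} \<union> (\<lambda>(y,z). (y+1,z+1)) ` Qs M"
  proof
    fix p assume p: "p \<in> Qs (M+2)"
    obtain y z where yz: "p = (y,z)" by force
    have h: "0<y" "y\<le>z" "y+z \<le> M+2" using p by (auto simp: yz Qs_def)
    show "p \<in> (\<lambda>z. (1,z)) ` {1..M+1} \<union> (\<lambda>(y,z). (y+1,z+1)) ` Qs M"
    proof (cases "y = 1")
      case True
      then have "p \<in> (\<lambda>z. (1,z)) ` {1..M+1}" using h by (intro rev_image_eqI[of z]) (auto simp: yz)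
      then show ?thesis by blast
    next
      case False
      then have "(y-1,z-1) \<in> Qs M" using h by (auto simp: Qs_def)
      moreover have "p = (\<lambda>(y,z). (y+1,z+1)) (y-1,z-1)" using h False by (auto simp: yz)
      ultimately show ?thesis by blast
    qed
  qed
next
  show "(\<lambda>z. (1,z)) ` {1..M+1} \<union> (\<lambda>(y,z). (y+1,z+1)) ` Qs M \<subseteq> Qs (M+2)"
    by (auto simp: Qs_def)
qed

lemma Qs_card_step: "card (Qs (M+2)) = M + 1 + card (Qs M)"
proof -
  have d: "(\<lambda>z. (1,z)) ` {1..M+1} \<inter> (\<lambda>(y,z). (y+1,z+1)) ` Qs M = {}"
    by (auto simp: Qs_def)
  have i: "inj_on (\<lambda>(y::nat,z::nat). (y+1,z+1)) (Qs M)" by (auto simp: inj_on_def)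
  have c1: "card ((\<lambda>z. (1::nat,z)) ` {1..M+1}) = M+1" by (subst card_image) (auto simp: inj_on_def)
  have "card (Qs (M+2)) = card ((\<lambda>z. (1::nat,z)) ` {1..M+1}) + card ((\<lambda>(y,z). (y+1,z+1)) ` Qs M)"
    unfolding Qs_step by (rule card_Un_disjoint[OF _ _ d]) (auto intro: Qs_finite)
  then show ?thesis using c1 card_image[OF i] by simp
qed

lemma Qs_card: "4 * card (Qs M) + M mod 2 = M^2"
proof (induction M rule: less_induct)
  case (less M)
  show ?case
  proof (cases "M < 2")
    case True then show ?thesis using Qs_small[OF True] by (cases M) (auto simp: power2_eq_square)
  next
    case False
    then obtain K where K: "M = K + 2" by (metis add.commute le_Suc_ex not_less)
    have "4 * card (Qs K) + K mod 2 = K^2" using less K by auto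
    then show ?thesis unfolding K Qs_card_step by (simp add: power2_eq_square algebra_simps)
  qed
qed

lemma Ss_small: "N < 3 \<Longrightarrow> Ss N = {}"
  by (auto simp: Ss_def)

lemma Ss_step: "Ss (N+3) = (\<lambda>(y,z). (1,y,z)) ` Qs (N+2) \<union> (\<lambda>(x,y,z). (x+1,y+1,z+1)) ` Ss N"
proof
  show "Ss (N+3) \<subseteq> (\<lambda>(y,z). (1,y,z)) ` Qs (N+2) \<union> (\<lambda>(x,y,z). (x+1,y+1,z+1)) ` Ss N"
  proof
    fix p assume p: "p \<in> Ss (N+3)"
    obtain x y z where xyz: "p = (x,y,z)" by (metis prod_cases3)
    have h: "0<x" "x\<le>y" "y\<le>z" "x+y+z \<le> N+3" using p by (auto simp: xyz Ss_def)
    show "p \<in> (\<lambda>(y,z). (1,y,z)) ` Qs (N+2) \<union> (\<lambda>(x,y,z). (x+1,y+1,z+1)) ` Ss N"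
    proof (cases "x = 1")
      case True
      then have "(y,z) \<in> Qs (N+2)" using h by (auto simp: Qs_def)
      moreover have "p = (\<lambda>(y,z). (1,y,z)) (y,z)" using True by (simp add: xyz)
      ultimately show ?thesis by blast
    next
      case False
      then have "(x-1,y-1,z-1) \<in> Ss N" using h by (auto simp: Ss_def)
      moreover have "p = (\<lambda>(x,y,z). (x+1,y+1,z+1)) (x-1,y-1,z-1)" using h False by (auto simp: xyz)
      ultimately show ?thesis by blast
    qed
  qed
next
  show "(\<lambda>(y,z). (1,y,z)) ` Qs (N+2) \<union> (\<lambda>(x,y,z). (x+1,y+1,z+1)) ` Ss N \<subseteq> Ss (N+3)"
    by (auto simp: Qs_def Ss_def)
qed

lemma Ss_card_step: "card (Ss (N+3)) = card (Qs (N+2)) + card (Ss N)"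
proof -
  have d: "(\<lambda>(y,z). (1::nat,y,z)) ` Qs (N+2) \<inter> (\<lambda>(x,y,z). (x+1,y+1,z+1)) ` Ss N = {}"
    by (auto simp: Ss_def)
  have i: "inj_on (\<lambda>(x::nat,y::nat,z::nat). (x+1,y+1,z+1)) (Ss N)" by (auto simp: inj_on_def)
  have i2: "inj_on (\<lambda>(y::nat,z::nat). (1::nat,y,z)) (Qs (N+2))" by (auto simp: inj_on_def)
  show ?thesis unfolding Ss_step
    by (subst card_Un_disjoint) (simp_all only: d card_image[OF i] card_image[OF i2] Qs_finite Ss_finite finite_imageI)
qed

definition rr :: "nat \<Rightarrow> nat" where
  "rr N = (if N mod 6 = 0 then 9 else if N mod 6 = 1 then 8 else if N mod 6 = 2 then 25
           else if N mod 6 = 3 then 0 else if N mod 6 = 4 then 17 else 16)"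

lemma rr_step: "rr (N+3) + 9 = rr N + 18 * (N mod 2)"
proof -
  define k where "k = N mod 6"
  have k6: "k < 6" by (simp add: k_def)
  have m2: "N mod 2 = k mod 2" unfolding k_def by (simp add: mod_mod_cancel)
  have m6: "(N+3) mod 6 = (k+3) mod 6" unfolding k_def by (simp add: mod_add_left_eq)
  have "k = 0 \<or> k = 1 \<or> k = 2 \<or> k = 3 \<or> k = 4 \<or> k = 5" using k6 by linarith
  then show ?thesis unfolding rr_def m2 m6 k_def[symmetric] by (elim disjE) simp_all
qed

lemma rr_lt: "rr N < 72" unfolding rr_def by auto

lemma Ss_card: "72 * int (card (Ss N)) + int (rr N) = 2 * int N ^ 3 + 3 * int N ^ 2 - 6 * int N + 9"
proof (induction N rule: less_induct)
  case (less N)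
  show ?case
  proof (cases "N < 3")
    case True then show ?thesis using Ss_small[OF True]
      by (cases N; cases "N - 1"; cases "N-2") (auto simp: rr_def)
  next
    case False
    then obtain K where K: "N = K + 3" by (metis add.commute le_Suc_ex not_less)
    have IH: "72 * int (card (Ss K)) + int (rr K) = 2 * int K ^ 3 + 3 * int K ^ 2 - 6 * int K + 9"
      using less K by auto
    have Q: "4 * int (card (Qs (K+2))) + int ((K+2) mod 2) = int (K+2)^2"
      using Qs_card[of "K+2"] by (metis of_nat_add of_nat_mult of_nat_numeral of_nat_power)
    have R: "int (rr (K+3)) + 9 = int (rr K) + 18 * int (K mod 2)"
      using rr_step[of K] by (metis of_nat_add of_nat_mult of_nat_numeral)
    have "(K+2) mod 2 = K mod 2" by simp
    then show ?thesis unfolding K Ss_card_step using IH Q R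
      by (simp add: power2_eq_square power3_eq_cube algebra_simps)
  qed
qed

lemma Ss_floor: "int (card (Ss N)) = \<lfloor>(2 * real N ^ 3 + 3 * real N ^ 2 - 6 * real N + 9) / 72\<rfloor>"
proof -
  have e: "2 * real N ^ 3 + 3 * real N ^ 2 - 6 * real N + 9 = 72 * real (card (Ss N)) + real (rr N)"
    using arg_cong[OF Ss_card[of N], of real_of_int] by simp
  show ?thesis unfolding e
    by (rule sym, rule floor_unique) (use rr_lt[of N] in \<open>auto simp: field_simps\<close>)
qed



abbreviation (input) lab :: "real^'n \<Rightarrow> real^'n \<Rightarrow> real^'n \<Rightarrow> 'n set" where
  "lab u v w \<equiv> {i. u$i \<noteq> v$i \<and> u$i \<noteq> w$i}"

lemma lab_comm: "{i. u$i \<noteq> v$i \<and> u$i \<noteq> w$i} = {i. u$i \<noteq> w$i \<and> u$i \<noteq> v$i}" by auto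

lemma verts:
  assumes "a \<in> cube_vertices" "b \<in> cube_vertices" "c \<in> cube_vertices"
  shows "convex hull {a,b,c} \<inter> cube_vertices = {a,b,c}"
  using hull_vertex[OF assms] assms by (auto intro: hull_inc)

lemma orbit_sub:
  assumes "g \<in> hyperoctahedral_group" "g ` T = T'"
  shows "Bn_orbit T' \<subseteq> Bn_orbit T"
proof
  fix X assume "X \<in> Bn_orbit T'"
  then obtain k where k: "k \<in> hyperoctahedral_group" "X = k ` T'" unfolding Bn_orbit_def by blast
  have "X = (k \<circ> g) ` T" unfolding k(2) assms(2)[symmetric] image_comp by (rule refl)
  moreover have "k \<circ> g \<in> hyperoctahedral_group" using group_comp k(1) assms(1) by blast
  ultimately show "X \<in> Bn_orbit T" unfolding Bn_orbit_def by blast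
qed

lemma construct_hull:
  fixes a b c a' b' c' :: "real^'n::finite"
  assumes cv: "a \<in> cube_vertices" "b \<in> cube_vertices" "c \<in> cube_vertices"
    "a' \<in> cube_vertices" "b' \<in> cube_vertices" "c' \<in> cube_vertices"
  and e1: "card (lab a b c) = card (lab a' b' c')"
  and e2: "card (lab b a c) = card (lab b' a' c')"
  and e3: "card (lab c a b) = card (lab c' a' b')"
  shows "\<exists>g\<in>hyperoctahedral_group. g ` (convex hull {a,b,c}) = convex hull {a',b',c'}"
proof -
  obtain g where g: "g \<in> hyperoctahedral_group" "g a = a'" "g b = b'" "g c = c'"
    using construct[OF cv e1 e2 e3] by blast
  then obtain \<sigma> C where gd: "g = hyperoct_map \<sigma> C" unfolding hyperoctahedral_group_def by blast
  have "g ` (convex hull {a,b,c}) = convex hull (g ` {a,b,c})" unfolding gd by (rule hm_hull)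
  also have "g ` {a,b,c} = {a',b',c'}" using g(2-4) by simp
  finally have "g ` (convex hull {a,b,c}) = convex hull {a',b',c'}" .
  then show ?thesis using g(1) by blast
qed

definition DD :: "((real^'n) \<times> (real^'n) \<times> (real^'n)) set" where
  "DD = {(a,b,c). a \<in> cube_vertices \<and> b \<in> cube_vertices \<and> c \<in> cube_vertices
     \<and> 0 < card (lab a b c) \<and> 0 < card (lab b a c) \<and> 0 < card (lab c a b)}"

lemma DD_distinct: assumes "(a,b,c) \<in> DD" shows "a \<noteq> b \<and> b \<noteq> c \<and> a \<noteq> c"
proof -
  have h: "0 < card (lab a b c)" "0 < card (lab b a c)" using assms by (simp_all add: DD_def)
  show ?thesis
  proof (intro conjI notI)
    assume "a = b" then show False using h(1) by simp
  next
    assume "b = c" then show False using h(2) by simp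
  next
    assume "a = c" then show False using h(1) by simp
  qed
qed

lemma angles_iff:
  fixes a b c :: "real^'n"
  assumes "a \<in> cube_vertices" "b \<in> cube_vertices" "c \<in> cube_vertices" "a \<noteq> b" "b \<noteq> c" "a \<noteq> c"
  shows "(vertex_angle a b c < pi / 2 \<and> vertex_angle b a c < pi / 2 \<and> vertex_angle c a b < pi / 2)
    \<longleftrightarrow> (0 < card (lab a b c) \<and> 0 < card (lab b a c) \<and> 0 < card (lab c a b))"
proof -
  have n: "b \<noteq> a" "c \<noteq> a" "c \<noteq> b" using assms(4-6) by auto
  have 1: "vertex_angle a b c < pi / 2 \<longleftrightarrow> 0 < card (lab a b c)"
    using angle_acute[OF n(1) n(2)] inner_cube[OF assms(1) assms(2) assms(3)] by simp
  have 2: "vertex_angle b a c < pi / 2 \<longleftrightarrow> 0 < card (lab b a c)"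
    using angle_acute[OF assms(4) n(3)] inner_cube[OF assms(2) assms(1) assms(3)] by simp
  have 3: "vertex_angle c a b < pi / 2 \<longleftrightarrow> 0 < card (lab c a b)"
    using angle_acute[OF assms(6) assms(5)] inner_cube[OF assms(3) assms(1) assms(2)] by simp
  show ?thesis using 1 2 3 by blast
qed

lemma acute_iff:
  "acute_zo_triangle T \<longleftrightarrow> (\<exists>a b c. (a,b,c) \<in> DD \<and> T = convex hull {a,b,c})"
proof
  assume "acute_zo_triangle T"
  then obtain a b c where h: "a \<in> cube_vertices" "b \<in> cube_vertices" "c \<in> cube_vertices" "a \<noteq> b" "b \<noteq> c" "a \<noteq> c"
    "T = convex hull {a,b,c}" "vertex_angle a b c < pi / 2 \<and> vertex_angle b a c < pi / 2 \<and> vertex_angle c a b < pi / 2"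
    unfolding acute_zo_triangle_def by blast
  then have "(a,b,c) \<in> DD" using angles_iff[OF h(1-6)] by (simp add: DD_def)
  then show "\<exists>a b c. (a,b,c) \<in> DD \<and> T = convex hull {a,b,c}" using h(7) by blast
next
  assume "\<exists>a b c. (a,b,c) \<in> DD \<and> T = convex hull {a,b,c}"
  then obtain a b c where h: "(a,b,c) \<in> DD" "T = convex hull {a,b,c}" by blast
  have cv: "a \<in> cube_vertices" "b \<in> cube_vertices" "c \<in> cube_vertices" using h(1) by (simp_all add: DD_def)
  have ds: "a \<noteq> b" "b \<noteq> c" "a \<noteq> c" using DD_distinct[OF h(1)] by simp_all
  have "vertex_angle a b c < pi / 2 \<and> vertex_angle b a c < pi / 2 \<and> vertex_angle c a b < pi / 2"
    using angles_iff[OF cv ds] h(1) by (simp add: DD_def)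
  then show "acute_zo_triangle T" unfolding acute_zo_triangle_def using cv ds h(2) by blast
qed

lemma key:
  fixes p q :: "(real^'n::finite) \<times> (real^'n) \<times> (real^'n)"
  assumes p: "p \<in> DD" and q: "q \<in> DD"
  shows "Bn_orbit (convex hull {fst p, fst (snd p), snd (snd p)}) = Bn_orbit (convex hull {fst q, fst (snd q), snd (snd q)})
    \<longleftrightarrow> mm {fst p, fst (snd p), snd (snd p)} = mm {fst q, fst (snd q), snd (snd q)}"
proof -
  obtain a b c where pe: "p = (a,b,c)" by (metis prod_cases3)
  obtain a' b' c' where qe: "q = (a',b',c')" by (metis prod_cases3)
  have cv: "a \<in> cube_vertices" "b \<in> cube_vertices" "c \<in> cube_vertices"
    "a' \<in> cube_vertices" "b' \<in> cube_vertices" "c' \<in> cube_vertices"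
    using p q by (auto simp: pe qe DD_def)
  have ds: "a \<noteq> b" "b \<noteq> c" "a \<noteq> c" "a' \<noteq> b'" "b' \<noteq> c'" "a' \<noteq> c'"
    using DD_distinct p q by (auto simp: pe qe)
  have "Bn_orbit (convex hull {a,b,c}) = Bn_orbit (convex hull {a',b',c'}) \<longleftrightarrow> mm {a,b,c} = mm {a',b',c'}"
  proof
    assume eq: "Bn_orbit (convex hull {a,b,c}) = Bn_orbit (convex hull {a',b',c'})"
    have "convex hull {a,b,c} = id ` (convex hull {a,b,c})" by simp
    then have "convex hull {a,b,c} \<in> Bn_orbit (convex hull {a,b,c})"
      unfolding Bn_orbit_def using group_id by blast
    then have "convex hull {a,b,c} \<in> Bn_orbit (convex hull {a',b',c'})" unfolding eq .
    from this[unfolded Bn_orbit_def] obtain g where g: "g \<in> hyperoctahedral_group" "convex hull {a,b,c} = g ` (convex hull {a',b',c'})"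
      by blast
    then obtain \<sigma> C where sC: "\<sigma> permutes UNIV" "g = hyperoct_map \<sigma> C" unfolding hyperoctahedral_group_def by blast
    have gh: "g ` (convex hull {a',b',c'}) = convex hull (g ` {a',b',c'})" unfolding sC(2) by (rule hm_hull)
    have gi: "g ` {a',b',c'} = {g a', g b', g c'}" by simp
    have gcv: "g a' \<in> cube_vertices" "g b' \<in> cube_vertices" "g c' \<in> cube_vertices"
      unfolding sC(2) using hm_cube cv(4-6) by auto
    have "{a,b,c} = convex hull {a,b,c} \<inter> cube_vertices" using verts[OF cv(1-3)] by (rule sym)
    also have "\<dots> = convex hull {g a', g b', g c'} \<inter> cube_vertices" unfolding g(2) gh gi ..
    also have "\<dots> = {g a', g b', g c'}" by (rule verts[OF gcv])
    finally have e1: "{a,b,c} = g ` {a',b',c'}" unfolding gi .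
    have e2: "mm (g ` {a',b',c'}) = mm {a',b',c'}" unfolding sC(2) by (rule mm_hm[OF sC(1)]) simp
    show "mm {a,b,c} = mm {a',b',c'}" unfolding e1 e2 ..
  next
    assume eq: "mm {a,b,c} = mm {a',b',c'}"
    have ex: "\<exists>g\<in>hyperoctahedral_group. g ` (convex hull {a,b,c}) = convex hull {a',b',c'}"
      if cv: "a \<in> cube_vertices" "b \<in> cube_vertices" "c \<in> cube_vertices"
        "a' \<in> cube_vertices" "b' \<in> cube_vertices" "c' \<in> cube_vertices"
      and ds: "a \<noteq> b" "b \<noteq> c" "a \<noteq> c" "a' \<noteq> b'" "b' \<noteq> c'" "a' \<noteq> c'"
      and eq: "mm {a,b,c} = mm {a',b',c'}" for a b c a' b' c' :: "real^'n"
    proof -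
      have m: "{#card (lab a b c), card (lab b a c), card (lab c a b)#} = {#card (lab a' b' c'), card (lab b' a' c'), card (lab c' a' b')#}"
        using eq mm3[OF ds(1-3)] mm3[OF ds(4-6)] by simp
      note m3 = mset3[OF m]
      note ch = construct_hull[OF cv(1-3)]
      have i1: "{b',a',c'} = {a',b',c'}" "{a',c',b'} = {a',b',c'}" "{b',c',a'} = {a',b',c'}"
        "{c',a',b'} = {a',b',c'}" "{c',b',a'} = {a',b',c'}" by auto
      have sw: "card (lab u v w) = card (lab u w v)" for u v w :: "real^'n" using lab_comm[of u v w] by simp
      note sws = sw[of a' b' c'] sw[of b' a' c'] sw[of c' a' b']
      from m3 show ?thesis
        apply (elim disjE conjE)
        subgoal
          apply (rule ch[OF cv(4) cv(5) cv(6)])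
          using sws by linarith+
        subgoal
          apply (subst i1(2)[symmetric])
          apply (rule ch[OF cv(4) cv(6) cv(5)])
          using sws by linarith+
        subgoal
          apply (subst i1(1)[symmetric])
          apply (rule ch[OF cv(5) cv(4) cv(6)])
          using sws by linarith+
        subgoal
          apply (subst i1(3)[symmetric])
          apply (rule ch[OF cv(5) cv(6) cv(4)])
          using sws by linarith+
        subgoal
          apply (subst i1(4)[symmetric])
          apply (rule ch[OF cv(6) cv(4) cv(5)])
          using sws by linarith+
        subgoal
          apply (subst i1(5)[symmetric])
          apply (rule ch[OF cv(6) cv(5) cv(4)])
          using sws by linarith+
        done
    qed
    obtain g where g1: "g \<in> hyperoctahedral_group" "g ` (convex hull {a,b,c}) = convex hull {a',b',c'}"
      using ex[OF cv ds eq] by blast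
    obtain g' where g2: "g' \<in> hyperoctahedral_group" "g' ` (convex hull {a',b',c'}) = convex hull {a,b,c}"
      using ex[OF cv(4-6) cv(1-3) ds(4-6) ds(1-3) eq[symmetric]] by blast
    show "Bn_orbit (convex hull {a,b,c}) = Bn_orbit (convex hull {a',b',c'})"
      using orbit_sub[OF g1] orbit_sub[OF g2] by (rule subset_antisym[rotated])
  qed
  then show ?thesis by (simp add: pe qe)
qed



lemma card_rel:
  assumes "\<And>x y. x \<in> D \<Longrightarrow> y \<in> D \<Longrightarrow> f x = f y \<longleftrightarrow> h x = h y"
  shows "card (f ` D) = card (h ` D)"
proof -
  let ?P = "(\<lambda>x. (f x, h x)) ` D"
  have 1: "fst ` ?P = f ` D" "snd ` ?P = h ` D" by (auto simp: image_image)
  have "inj_on fst ?P" using assms by (auto simp: inj_on_def)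
  moreover have "inj_on snd ?P" using assms by (auto simp: inj_on_def)
  ultimately show ?thesis using card_image 1 by metis
qed

definition MSt :: "nat \<Rightarrow> nat multiset set" where
  "MSt N = {{#x,y,z#} | x y z. 0<x \<and> 0<y \<and> 0<z \<and> x+y+z \<le> N}"

lemma sort3:
  fixes x y z :: nat
  shows "\<exists>p q r. {#x,y,z#} = {#p,q,r#} \<and> p \<le> q \<and> q \<le> r \<and> p+q+r = x+y+z \<and> min x (min y z) = p"
proof -
  have "(x \<le> y \<and> y \<le> z) \<or> (x \<le> z \<and> z \<le> y) \<or> (y \<le> x \<and> x \<le> z) \<or> (y \<le> z \<and> z \<le> x) \<or> (z \<le> x \<and> x \<le> y) \<or> (z \<le> y \<and> y \<le> x)"
    by linarith
  then show ?thesis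
  proof (elim disjE conjE)
    assume "x \<le> y" "y \<le> z" then show ?thesis by (intro exI[of _ x] exI[of _ y] exI[of _ z]) auto
  next
    assume "x \<le> z" "z \<le> y" then show ?thesis by (intro exI[of _ x] exI[of _ z] exI[of _ y]) (auto simp: add_mset_commute)
  next
    assume "y \<le> x" "x \<le> z" then show ?thesis by (intro exI[of _ y] exI[of _ x] exI[of _ z]) (auto simp: add_mset_commute)
  next
    assume "y \<le> z" "z \<le> x" then show ?thesis by (intro exI[of _ y] exI[of _ z] exI[of _ x]) (auto simp: add_mset_commute)
  next
    assume "z \<le> x" "x \<le> y" then show ?thesis by (intro exI[of _ z] exI[of _ x] exI[of _ y]) (auto simp: add_mset_commute)
  next
    assume "z \<le> y" "y \<le> x" then show ?thesis by (intro exI[of _ z] exI[of _ y] exI[of _ x]) (auto simp: add_mset_commute)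
  qed
qed

lemma MSt_card: "card (MSt N) = card (Ss N)"
proof -
  let ?t = "\<lambda>(x::nat,y::nat,z::nat). {#x,y,z#}"
  have "MSt N = ?t ` Ss N"
  proof
    show "?t ` Ss N \<subseteq> MSt N"
    proof
      fix m assume "m \<in> ?t ` Ss N"
      then obtain x y z where h: "(x,y,z) \<in> Ss N" "m = {#x,y,z#}" by auto
      have "0<x \<and> 0<y \<and> 0<z \<and> x+y+z \<le> N" using h(1) by (auto simp: Ss_def)
      then show "m \<in> MSt N" unfolding MSt_def using h(2) by blast
    qed
  next
    show "MSt N \<subseteq> ?t ` Ss N"
    proof
      fix m assume "m \<in> MSt N"
      then obtain x y z where m: "m = {#x,y,z#}" "0<x" "0<y" "0<z" "x+y+z \<le> N" unfolding MSt_def by blast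
      obtain p q r where "{#x,y,z#} = {#p,q,r#}" "p \<le> q" "q \<le> r" "p+q+r = x+y+z" "min x (min y z) = p"
        using sort3 by blast
      moreover have "0 < min x (min y z)" using m by simp
      ultimately have "(p,q,r) \<in> Ss N" "m = ?t (p,q,r)" using m by (auto simp: Ss_def)
      then show "m \<in> ?t ` Ss N" by blast
    qed
  qed
  moreover have "inj_on ?t (Ss N)"
  proof (rule inj_onI)
    fix u v assume u: "u \<in> Ss N" and v: "v \<in> Ss N" and e: "?t u = ?t v"
    obtain x y z where ux: "u = (x,y,z)" by (metis prod_cases3)
    obtain x' y' z' where vx: "v = (x',y',z')" by (metis prod_cases3)
    have o: "x \<le> y" "y \<le> z" "x' \<le> y'" "y' \<le> z'" using u v by (auto simp: ux vx Ss_def)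
    have "{#x,y,z#} = {#x',y',z'#}" using e by (simp add: ux vx)
    from mset3[OF this] have "x = x' \<and> y = y' \<and> z = z'"
      using o by (elim disjE conjE) linarith+
    then show "u = v" by (simp add: ux vx)
  qed
  ultimately show ?thesis by (simp add: card_image)
qed



lemma lab_disj:
  assumes "a \<in> cube_vertices" "b \<in> cube_vertices" "c \<in> cube_vertices"
  shows "lab a b c \<inter> lab b a c = {}"
proof -
  have "False" if "a$i \<noteq> b$i" "a$i \<noteq> c$i" "b$i \<noteq> c$i" for i
    using cubeD[OF assms(1), of i] cubeD[OF assms(2), of i] cubeD[OF assms(3), of i] that by auto
  then show ?thesis by blast
qed

lemma image_DD:
  "(\<lambda>p. mm {fst p, fst (snd p), snd (snd p)}) ` (DD :: ((real^'n::finite) \<times> (real^'n) \<times> (real^'n)) set) = MSt CARD('n)"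
proof
  show "(\<lambda>p. mm {fst p, fst (snd p), snd (snd p)}) ` (DD :: ((real^'n) \<times> (real^'n) \<times> (real^'n)) set) \<subseteq> MSt CARD('n)"
  proof
    fix m assume "m \<in> (\<lambda>p. mm {fst p, fst (snd p), snd (snd p)}) ` (DD :: ((real^'n) \<times> (real^'n) \<times> (real^'n)) set)"
    then obtain a b c :: "real^'n" where p: "(a,b,c) \<in> DD" "m = mm {a,b,c}" by auto
    have cv: "a \<in> cube_vertices" "b \<in> cube_vertices" "c \<in> cube_vertices" using p(1) by (simp_all add: DD_def)
    have ds: "a \<noteq> b" "b \<noteq> c" "a \<noteq> c" using DD_distinct[OF p(1)] by simp_all
    have pos: "0 < card (lab a b c)" "0 < card (lab b a c)" "0 < card (lab c a b)" using p(1) by (simp_all add: DD_def)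
    have d1: "lab a b c \<inter> lab b a c = {}" by (rule lab_disj[OF cv])
    have "lab a c b \<inter> lab c a b = {}" by (rule lab_disj[OF cv(1) cv(3) cv(2)])
    then have d2: "lab a b c \<inter> lab c a b = {}" unfolding lab_comm[of a c b] .
    have "lab b c a \<inter> lab c b a = {}" by (rule lab_disj[OF cv(2) cv(3) cv(1)])
    then have d3: "lab b a c \<inter> lab c a b = {}" unfolding lab_comm[of b c a] lab_comm[of c b a] .
    have "card (lab a b c \<union> lab b a c \<union> lab c a b) = card (lab a b c) + card (lab b a c) + card (lab c a b)"
      using d1 d2 d3 by (simp add: card_Un_disjoint Int_Un_distrib2)
    moreover have "card (lab a b c \<union> lab b a c \<union> lab c a b) \<le> CARD('n)" by (rule card_mono) auto
    ultimately have "card (lab a b c) + card (lab b a c) + card (lab c a b) \<le> CARD('n)" by simp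
    then show "m \<in> MSt CARD('n)" unfolding MSt_def p(2) mm3[OF ds] using pos by blast
  qed
next
  show "MSt CARD('n) \<subseteq> (\<lambda>p. mm {fst p, fst (snd p), snd (snd p)}) ` (DD :: ((real^'n) \<times> (real^'n) \<times> (real^'n)) set)"
  proof
    fix m assume "m \<in> MSt CARD('n)"
    then obtain x y z where m: "m = {#x,y,z#}" "0<x" "0<y" "0<z" "x+y+z \<le> CARD('n)" unfolding MSt_def by blast
    obtain e where e: "bij_betw e {0..<CARD('n)} (UNIV :: 'n set)" using ex_bij_betw_nat_finite[of "UNIV :: 'n set"] by auto
    have ie: "inj_on e {0..<CARD('n)}" using e bij_betw_imp_inj_on by blast
    define A where "A = e ` {0..<x}"
    define B where "B = e ` {x..<x+y}"
    define C where "C = e ` {x+y..<x+y+z}"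
    have sub: "{0..<x} \<subseteq> {0..<CARD('n)}" "{x..<x+y} \<subseteq> {0..<CARD('n)}" "{x+y..<x+y+z} \<subseteq> {0..<CARD('n)}"
      using m(5) by auto
    have cA: "card A = x" unfolding A_def by (subst card_image[OF inj_on_subset[OF ie sub(1)]]) simp
    have cB: "card B = y" unfolding B_def by (subst card_image[OF inj_on_subset[OF ie sub(2)]]) simp
    have cC: "card C = z" unfolding C_def by (subst card_image[OF inj_on_subset[OF ie sub(3)]]) simp
    have dAB: "A \<inter> B = {}" unfolding A_def B_def
      using inj_on_image_Int[OF ie sub(1) sub(2)] by auto
    have dAC: "A \<inter> C = {}" unfolding A_def C_def
      using inj_on_image_Int[OF ie sub(1) sub(3)] by auto
    have dBC: "B \<inter> C = {}" unfolding B_def C_def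
      using inj_on_image_Int[OF ie sub(2) sub(3)] by auto
    define a :: "real^'n" where "a = 0"
    define b :: "real^'n" where "b = (\<chi> i. if i \<in> A \<union> B then 1 else 0)"
    define c :: "real^'n" where "c = (\<chi> i. if i \<in> A \<union> C then 1 else 0)"
    have cv: "a \<in> cube_vertices" "b \<in> cube_vertices" "c \<in> cube_vertices"
      by (auto simp: cube_vertices_def a_def b_def c_def)
    have l1: "lab a b c = A"
    proof (rule set_eqI)
      fix i show "i \<in> lab a b c \<longleftrightarrow> i \<in> A" using dBC by (simp add: a_def b_def c_def) blast
    qed
    have l2: "lab b a c = B"
    proof (rule set_eqI)
      fix i show "i \<in> lab b a c \<longleftrightarrow> i \<in> B" using dAB dBC by (simp add: a_def b_def c_def) blast
    qed
    have l3: "lab c a b = C"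
    proof (rule set_eqI)
      fix i show "i \<in> lab c a b \<longleftrightarrow> i \<in> C" using dAC dBC by (simp add: a_def b_def c_def) blast
    qed
    have D: "(a,b,c) \<in> DD" unfolding DD_def using cv l1 l2 l3 cA cB cC m(2-4) by simp
    have ds: "a \<noteq> b" "b \<noteq> c" "a \<noteq> c" using DD_distinct[OF D] by simp_all
    have mE: "m = mm {a,b,c}" unfolding mm3[OF ds] l1 l2 l3 cA cB cC m(1) ..
    show "m \<in> (\<lambda>p. mm {fst p, fst (snd p), snd (snd p)}) ` (DD :: ((real^'n) \<times> (real^'n) \<times> (real^'n)) set)" by (rule rev_image_eqI[OF D]) (simp add: mE)
  qed
qed

lemma orbits_DD:
  "{Bn_orbit T | T :: (real ^ 'n::finite) set. acute_zo_triangle T}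
    = (\<lambda>p. Bn_orbit (convex hull {fst p, fst (snd p), snd (snd p)})) ` (DD :: ((real^'n) \<times> (real^'n) \<times> (real^'n)) set)"
proof (rule set_eqI)
  fix O' :: "(real^'n) set set"
  show "O' \<in> {Bn_orbit T | T :: (real ^ 'n::finite) set. acute_zo_triangle T} \<longleftrightarrow>
    O' \<in> (\<lambda>p. Bn_orbit (convex hull {fst p, fst (snd p), snd (snd p)})) ` (DD :: ((real^'n) \<times> (real^'n) \<times> (real^'n)) set)"
  proof
    assume "O' \<in> {Bn_orbit T | T :: (real ^ 'n::finite) set. acute_zo_triangle T}"
    then obtain T :: "(real^'n) set" where "O' = Bn_orbit T" "acute_zo_triangle T" by blast
    then obtain a b c where "(a,b,c) \<in> DD" "T = convex hull {a,b,c}" "O' = Bn_orbit T" unfolding acute_iff by blast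
    then show "O' \<in> (\<lambda>p. Bn_orbit (convex hull {fst p, fst (snd p), snd (snd p)})) ` DD"
      by (intro rev_image_eqI[of "(a,b,c)"]) simp_all
  next
    assume "O' \<in> (\<lambda>p. Bn_orbit (convex hull {fst p, fst (snd p), snd (snd p)})) ` (DD :: ((real^'n) \<times> (real^'n) \<times> (real^'n)) set)"
    then obtain a b c :: "real^'n" where h: "(a,b,c) \<in> DD" "O' = Bn_orbit (convex hull {a,b,c})" by auto
    have "acute_zo_triangle (convex hull {a,b,c})" unfolding acute_iff using h(1) by blast
    then show "O' \<in> {Bn_orbit T | T :: (real ^ 'n::finite) set. acute_zo_triangle T}" using h(2) by blast
  qed
qed

theorem theorem4p23:
  "int (card {Bn_orbit T | T :: (real ^ 'n) set. acute_zo_triangle T})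
     = \<lfloor>(2 * real CARD('n) ^ 3 + 3 * real CARD('n) ^ 2 - 6 * real CARD('n) + 9) / 72\<rfloor>"
proof -
  have "card {Bn_orbit T | T :: (real ^ 'n) set. acute_zo_triangle T}
     = card ((\<lambda>p. mm {fst p, fst (snd p), snd (snd p)}) ` (DD :: ((real^'n) \<times> (real^'n) \<times> (real^'n)) set))"
    unfolding orbits_DD by (rule card_rel) (rule key)
  also have "\<dots> = card (Ss CARD('n))" unfolding image_DD by (rule MSt_card)
  finally show ?thesis using Ss_floor by simp
qed


end
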